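(* Let $N$ be a natural number, and let $\mathcal{T}_N$ be the class of all finite reflexive graphs $G$ whose vertex set can be written as a disjoint union $G_e\cup G_c\cup G_f$ such that: the graph induced on $G_e$ is empty; the graph induced on $G_c$ is complete; $|G_f|\le N$; and the connections between $G_e$ and $G_c$ are uniform, i.e. for all $x,y\in G_e$ and all $z,t\in G_c$, $x$ is adjacent to $z$ if and only if $y$ is adjacent to $t$. Then $\mathcal{T}_N$ is well quasi-ordered under both the standard and the strong homomorphic image orderings.
   Context: A graph is a digraph (set with binary relation $E$) whose edge relation is symmetric; a reflexive graph has a loop at every vertex. Empty means no edges between distinct vertices; complete means all pairs of distinct vertices are adjacent. A homomorphism maps edges to edges (in reflexive graphs, an edge or a non-edge may be collapsed to a single vertex); it is strong if additionally every edge of the target among vertices of the image is the image of an edge. Standard homomorphic image ordering: $A\preceq B$ iff there is a surjective homomorphism $B\to A$; strong: iff there is a surjective strong homomorphism $B\to A$. Well quasi-ordered means no infinite strictly decreasing sequence and no infinite antichain; structures considered up to isomorphism. *)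

theory Defs
  imports Main
begin

text \<open>A graph is a pair (V, E): a vertex set V and a binary relation E; only the
  values of E on V matter. Finite graphs can be taken, up to isomorphism, on
  natural-number vertices.\<close>

type_synonym graph = "nat set \<times> (nat \<Rightarrow> nat \<Rightarrow> bool)"

definition verts :: "graph \<Rightarrow> nat set" where "verts G = fst G"
definition adj :: "graph \<Rightarrow> nat \<Rightarrow> nat \<Rightarrow> bool" where "adj G = snd G"

definition finite_refl_graph :: "graph \<Rightarrow> bool" where
  "finite_refl_graph G \<longleftrightarrow> finite (verts G)
     \<and> (\<forall>x\<in>verts G. \<forall>y\<in>verts G. adj G x y \<longrightarrow> adj G y x)
     \<and> (\<forall>x\<in>verts G. adj G x x)"

definition hom :: "(nat \<Rightarrow> nat) \<Rightarrow> graph \<Rightarrow> graph \<Rightarrow> bool" where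
  "hom f G H \<longleftrightarrow> (\<forall>x\<in>verts G. f x \<in> verts H)
     \<and> (\<forall>x\<in>verts G. \<forall>y\<in>verts G. adj G x y \<longrightarrow> adj H (f x) (f y))"

definition strong_hom :: "(nat \<Rightarrow> nat) \<Rightarrow> graph \<Rightarrow> graph \<Rightarrow> bool" where
  "strong_hom f G H \<longleftrightarrow> hom f G H
     \<and> (\<forall>u\<in>f ` verts G. \<forall>v\<in>f ` verts G. adj H u v \<longrightarrow>
          (\<exists>x\<in>verts G. \<exists>y\<in>verts G. f x = u \<and> f y = v \<and> adj G x y))"

definition hom_image_le :: "graph \<Rightarrow> graph \<Rightarrow> bool" where
  "hom_image_le A B \<longleftrightarrow> (\<exists>f. hom f B A \<and> f ` verts B = verts A)"

definition strong_hom_image_le :: "graph \<Rightarrow> graph \<Rightarrow> bool" where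
  "strong_hom_image_le A B \<longleftrightarrow> (\<exists>f. strong_hom f B A \<and> f ` verts B = verts A)"

definition well_quasi_ordered_on :: "('b \<Rightarrow> 'b \<Rightarrow> bool) \<Rightarrow> 'b set \<Rightarrow> bool" where
  "well_quasi_ordered_on le S \<longleftrightarrow>
     (\<not> (\<exists>g::nat \<Rightarrow> 'b. (\<forall>i. g i \<in> S) \<and> (\<forall>i. le (g (Suc i)) (g i) \<and> \<not> le (g i) (g (Suc i)))))
   \<and> (\<not> (\<exists>g::nat \<Rightarrow> 'b. (\<forall>i. g i \<in> S) \<and> (\<forall>i j::nat. i \<noteq> j \<longrightarrow> \<not> le (g i) (g j))))"

definition T_class :: "nat \<Rightarrow> graph set" where
  "T_class N = {G. finite_refl_graph G \<and>
     (\<exists>Ge Gc Gf. verts G = Ge \<union> Gc \<union> Gf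
        \<and> Ge \<inter> Gc = {} \<and> Ge \<inter> Gf = {} \<and> Gc \<inter> Gf = {}
        \<and> (\<forall>x\<in>Ge. \<forall>y\<in>Ge. x \<noteq> y \<longrightarrow> \<not> adj G x y)
        \<and> (\<forall>x\<in>Gc. \<forall>y\<in>Gc. x \<noteq> y \<longrightarrow> adj G x y)
        \<and> card Gf \<le> N
        \<and> (\<forall>x\<in>Ge. \<forall>y\<in>Ge. \<forall>z\<in>Gc. \<forall>t\<in>Gc. adj G x z \<longleftrightarrow> adj G y t))}"

end

theory Submission
  imports Defs "HOL-Library.Ramsey"
begin


lemma mono_sub:
  fixes h :: "nat \<Rightarrow> nat"
  assumes "infinite I"
  shows "\<exists>J\<subseteq>I. infinite J \<and> (\<forall>i\<in>J. \<forall>j\<in>J. i < j \<longrightarrow> h i \<le> h j)"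
proof -
  define f where "f S = (if h (Min S) \<le> h (Max S) then 0 else (1::nat))" for S :: "nat set"
  have "\<forall>x\<in>I. \<forall>y\<in>I. x \<noteq> y \<longrightarrow> f {x, y} < 2" by (simp add: f_def)
  from Ramsey2[OF assms this] obtain Y t where Y: "Y \<subseteq> I" "infinite Y" "t < 2"
    and hom: "\<forall>x\<in>Y. \<forall>y\<in>Y. x\<noteq>y \<longrightarrow> f {x, y} = t" by blast
  have mm: "Min {i, j} = i" "Max {i,j} = j" if "i < j" for i j :: nat using that by auto
  show ?thesis
  proof (cases "t = 0")
    case True
    have "h i \<le> h j" if "i \<in> Y" "j \<in> Y" "i < j" for i j
    proof -
      have "f {i, j} = 0" using hom that True by auto
      then show ?thesis unfolding f_def mm[OF \<open>i<j\<close>] by (simp split: if_splits)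
    qed
    then show ?thesis using Y by (intro exI[of _ Y]) auto
  next
    case False
    then have t1: "t = 1" using Y by simp
    have dec: "h j < h i" if "i \<in> Y" "j \<in> Y" "i < j" for i j
    proof -
      have "f {i, j} = 1" using hom that t1 by auto
      then show ?thesis unfolding f_def mm[OF \<open>i<j\<close>] by (simp split: if_splits)
    qed
    obtain y0 where "y0 \<in> Y" using Y(2) by (metis finite.emptyI ex_in_conv)
    from ex_has_least_nat[of "\<lambda>x. x \<in> Y" y0 h, OF this] obtain y where
      y: "y \<in> Y" "\<forall>z. z \<in> Y \<longrightarrow> h y \<le> h z" by blast
    from Y(2) obtain z where "z \<in> Y" "z > y" by (meson infinite_nat_iff_unbounded)
    with dec[OF y(1) this(1) this(2)] y(2) show ?thesis by force
  qed
qed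

lemma dickson_sub:
  fixes c :: "nat \<Rightarrow> 'l \<Rightarrow> nat"
  assumes "finite \<Lambda>"
  shows "infinite I \<Longrightarrow> \<exists>J\<subseteq>I. infinite J \<and> (\<forall>i\<in>J. \<forall>j\<in>J. i < j \<longrightarrow> (\<forall>l\<in>\<Lambda>. c i l \<le> c j l))"
  using assms
proof (induction \<Lambda> arbitrary: I rule: finite_induct)
  case empty
  then show ?case by blast
next
  case (insert l F)
  from insert.IH[OF insert.prems] obtain J where J: "J \<subseteq> I" "infinite J"
    "\<forall>i\<in>J. \<forall>j\<in>J. i < j \<longrightarrow> (\<forall>l\<in>F. c i l \<le> c j l)" by blast
  from mono_sub[OF J(2), of "\<lambda>i. c i l"] obtain K where
    "K \<subseteq> J" "infinite K" "\<forall>i\<in>K. \<forall>j\<in>K. i < j \<longrightarrow> c i l \<le> c j l" by blast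
  with J show ?case by (intro exI[of _ K]) blast
qed

lemma dickson_pair:
  fixes c :: "nat \<Rightarrow> 'l \<Rightarrow> nat"
  assumes "finite \<Lambda>" "finite F" "\<forall>i. D i \<in> F"
  shows "\<exists>i j. i < j \<and> D i = D j \<and> (\<forall>l\<in>\<Lambda>. c i l \<le> c j l)"
proof -
  have "finite (D ` UNIV)" using assms(2,3) by (meson finite_subset image_subset_iff)
  from inf_img_fin_dom'[OF this infinite_UNIV_nat] obtain y where
    y: "infinite (D -` {y} \<inter> UNIV)" by blast
  from dickson_sub[OF assms(1) y, of c] obtain J where J: "J \<subseteq> D -` {y}" "infinite J"
    "\<forall>i\<in>J. \<forall>j\<in>J. i < j \<longrightarrow> (\<forall>l\<in>\<Lambda>. c i l \<le> c j l)" by auto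
  obtain i where "i \<in> J" using J(2) by (metis finite.emptyI ex_in_conv)
  moreover from J(2) obtain j where "j \<in> J" "j > i" by (meson infinite_nat_iff_unbounded)
  ultimately show ?thesis using J by (intro exI[of _ i] exI[of _ j]) auto
qed

lemma dec_contra:
  fixes n e :: "nat \<Rightarrow> nat"
  assumes st: "\<forall>i. n (Suc i) < n i \<or> (n (Suc i) = n i \<and> e i < e (Suc i))"
    and bd: "\<forall>i. e i \<le> n i * n i"
  shows False
proof -
  define K where "K = n 0 * n 0"
  define m where "m i = (K + 1) * n i + (K - e i)" for i
  have "n i \<le> n 0 \<and> m i + i \<le> m 0" for i
  proof (induction i)
    case 0 then show ?case by simp
  next
    case (Suc i)
    have ni: "n i \<le> n 0" using Suc by simp
    have nsi: "n (Suc i) \<le> n 0" using st[rule_format, of i] ni by auto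
    have eb: "e (Suc i) \<le> K" using bd[rule_format, of "Suc i"] nsi unfolding K_def
      by (meson le_trans mult_le_mono)
    have "m (Suc i) < m i"
    proof (cases "n (Suc i) < n i")
      case True
      then obtain d where d: "n i = n (Suc i) + Suc d" using less_iff_Suc_add[of "n (Suc i)" "n i"] by (auto simp: add.commute)
      have "m (Suc i) \<le> (K + 1) * n (Suc i) + K" unfolding m_def by simp
      also have "\<dots> < (K+1) * n (Suc i) + (K + 1) * Suc d" by simp
      also have "\<dots> = (K+1) * n i" by (simp add: d algebra_simps)
      also have "\<dots> \<le> m i" unfolding m_def by simp
      finally show ?thesis .
    next
      case False
      with st[rule_format, of i] have "n (Suc i) = n i" "e i < e (Suc i)" by auto
      then show ?thesis unfolding m_def using eb by simp
    qed
    then show ?case using Suc nsi by simp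
  qed
  from this[of "Suc (m 0)"] show False by simp
qed



definition Eset :: "graph \<Rightarrow> (nat \<times> nat) set" where
  "Eset G = {(x,y). x \<in> verts G \<and> y \<in> verts G \<and> adj G x y}"

lemma Eset_sub: "Eset G \<subseteq> verts G \<times> verts G" by (auto simp: Eset_def)

lemma Eset_card: "finite (verts G) \<Longrightarrow> card (Eset G) \<le> card (verts G) * card (verts G)"
  by (metis Eset_sub card_cartesian_product card_mono finite_cartesian_product)

lemma step:
  assumes h: "hom f B A" and s: "f ` verts B = verts A" and fin: "finite (verts B)"
    and nle: "\<not> strong_hom_image_le B A"
  shows "card (verts A) < card (verts B) \<or> (card (verts A) = card (verts B) \<and> card (Eset B) < card (Eset A))"
proof (rule ccontr)
  assume c: "\<not> ?thesis"
  have le: "card (verts A) \<le> card (verts B)" using s card_image_le[OF fin, of f] by simp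
  with c have eqV: "card (verts A) = card (verts B)" and le2: "card (Eset A) \<le> card (Eset B)" by auto
  have inj: "inj_on f (verts B)" using eq_card_imp_inj_on[OF fin, of f] eqV s by simp
  have finA: "finite (verts A)" using s fin by (metis finite_imageI)
  have finEA: "finite (Eset A)" using Eset_sub finA by (meson finite_SigmaI finite_subset)
  have finEB: "finite (Eset B)" using Eset_sub fin by (meson finite_SigmaI finite_subset)
  define \<phi> where "\<phi> = map_prod f f"
  have sub: "\<phi> ` Eset B \<subseteq> Eset A" using h unfolding \<phi>_def Eset_def hom_def by auto
  have injp: "inj_on \<phi> (Eset B)" using inj unfolding \<phi>_def Eset_def inj_on_def by auto
  have "card (Eset B) = card (\<phi> ` Eset B)" using card_image[OF injp] by simp
  also have "\<dots> \<le> card (Eset A)" using card_mono[OF finEA sub] .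
  finally have "card (Eset B) \<le> card (Eset A)" .
  with le2 have "card (\<phi> ` Eset B) = card (Eset A)" using card_image[OF injp] by simp
  then have im: "\<phi> ` Eset B = Eset A" using card_subset_eq[OF finEA sub] by simp
  define g where "g = inv_into (verts B) f"
  have gf: "g (f x) = x" if "x \<in> verts B" for x using inj that unfolding g_def by simp
  have fg: "f (g y) = y" "g y \<in> verts B" if "y \<in> verts A" for y
    using that s unfolding g_def by (auto intro: f_inv_into_f inv_into_into)
  have gs: "g ` verts A = verts B"
  proof
    show "g ` verts A \<subseteq> verts B" using fg by auto
    show "verts B \<subseteq> g ` verts A"
    proof
      fix x assume "x \<in> verts B"
      then show "x \<in> g ` verts A" using gf s by (metis imageI)
    qed
  qed
  have hg: "hom g A B"
    unfolding hom_def
  proof (intro conjI ballI impI)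
    fix u assume "u \<in> verts A" then show "g u \<in> verts B" using fg by simp
  next
    fix u v assume uv: "u \<in> verts A" "v \<in> verts A" "adj A u v"
    then have "(u,v) \<in> \<phi> ` Eset B" using im by (simp add: Eset_def)
    then obtain x y where "(x,y) \<in> Eset B" "u = f x" "v = f y" unfolding \<phi>_def by auto
    then show "adj B (g u) (g v)" using gf by (auto simp: Eset_def)
  qed
  have "strong_hom g A B"
    unfolding strong_hom_def
  proof (intro conjI hg ballI impI)
    fix u v assume uv: "u \<in> g ` verts A" "v \<in> g ` verts A" "adj B u v"
    then have "u \<in> verts B" "v \<in> verts B" using gs by auto
    then show "\<exists>x\<in>verts A. \<exists>y\<in>verts A. g x = u \<and> g y = v \<and> adj A x y"
      using uv(3) gf s h unfolding hom_def by (intro bexI[of _ "f u"] bexI[of _ "f v"]) auto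
  qed
  with gs nle show False unfolding strong_hom_image_le_def by blast
qed

lemma strong_le_hom_le: "strong_hom_image_le A B \<Longrightarrow> hom_image_le A B"
  unfolding strong_hom_image_le_def hom_image_le_def strong_hom_def by blast

lemma strong_from_iff:
  assumes s: "f ` verts B = verts A" and rA: "\<forall>y\<in>verts A. adj A y y" and rB: "\<forall>x\<in>verts B. adj B x x"
    and iff: "\<forall>x\<in>verts B. \<forall>y\<in>verts B. f x \<noteq> f y \<longrightarrow> (adj A (f x) (f y) \<longleftrightarrow> adj B x y)"
  shows "strong_hom_image_le A B"
proof -
  have h: "hom f B A" unfolding hom_def
  proof (intro conjI ballI impI)
    fix x assume "x \<in> verts B" then show "f x \<in> verts A" using s by auto
  next
    fix x y assume xy: "x \<in> verts B" "y \<in> verts B" "adj B x y"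
    show "adj A (f x) (f y)"
    proof (cases "f x = f y")
      case True then show ?thesis using rA s xy by auto
    next
      case False then show ?thesis using iff xy by auto
    qed
  qed
  have "strong_hom f B A" unfolding strong_hom_def
  proof (intro conjI h ballI impI)
    fix u v assume uv: "u \<in> f ` verts B" "v \<in> f ` verts B" "adj A u v"
    then obtain x y where xy: "x \<in> verts B" "y \<in> verts B" "u = f x" "v = f y" by auto
    show "\<exists>x\<in>verts B. \<exists>y\<in>verts B. f x = u \<and> f y = v \<and> adj B x y"
    proof (cases "u = v")
      case True then show ?thesis using xy rB by auto
    next
      case False then show ?thesis using xy iff uv(3) by auto
    qed
  qed
  then show ?thesis using s unfolding strong_hom_image_le_def by blast
qed

definition labelling :: "'l set \<Rightarrow> graph \<Rightarrow> (nat \<Rightarrow> 'l) \<Rightarrow> ('l \<Rightarrow> 'l \<Rightarrow> bool) \<Rightarrow> bool" where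
  "labelling \<Lambda> G L R \<longleftrightarrow> L ` verts G \<subseteq> \<Lambda> \<and>
     (\<forall>x\<in>verts G. \<forall>y\<in>verts G. x \<noteq> y \<longrightarrow> (adj G x y \<longleftrightarrow> R (L x) (L y)))"

lemma surj_card:
  assumes "finite X" "finite Y" "card Y \<le> card X" "Y \<noteq> {}"
  shows "\<exists>g. g ` X = Y"
proof -
  from card_le_inj[OF assms(2,1,3)] obtain h where h: "h ` Y \<subseteq> X" "inj_on h Y" by blast
  obtain y0 where y0: "y0 \<in> Y" using assms(4) by blast
  define g where "g x = (if x \<in> h ` Y then inv_into Y h x else y0)" for x
  have "g ` X = Y"
  proof
    show "g ` X \<subseteq> Y" using y0 by (auto simp: g_def inv_into_into)
    show "Y \<subseteq> g ` X"
    proof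
      fix y assume "y \<in> Y"
      then have "g (h y) = y" "h y \<in> X" using h by (auto simp: g_def)
      then show "y \<in> g ` X" by (metis imageI)
    qed
  qed
  then show ?thesis by blast
qed

lemma transfer:
  assumes lA: "labelling \<Lambda> A LA RA" and lB: "labelling \<Lambda> B LB RB"
    and RR: "\<forall>a\<in>\<Lambda>. \<forall>b\<in>\<Lambda>. RA a b = RB a b"
    and im: "LA ` verts A = LB ` verts B"
    and cnt: "\<forall>l\<in>\<Lambda>. card {x\<in>verts A. LA x = l} \<le> card {x\<in>verts B. LB x = l}"
    and fA: "finite (verts A)" and fB: "finite (verts B)"
    and rA: "\<forall>y\<in>verts A. adj A y y" and rB: "\<forall>x\<in>verts B. adj B x x"
  shows "strong_hom_image_le A B"
proof -
  define FA where "FA l = {x\<in>verts A. LA x = l}" for l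
  define FB where "FB l = {x\<in>verts B. LB x = l}" for l
  have ex: "\<exists>g. g ` FB l = FA l" if "l \<in> LB ` verts B" for l
  proof (rule surj_card)
    show "finite (FB l)" "finite (FA l)" using fA fB by (auto simp: FA_def FB_def)
    show "card (FA l) \<le> card (FB l)" using cnt lB that unfolding FA_def FB_def labelling_def by auto
    show "FA l \<noteq> {}" using that im unfolding FA_def by (metis (mono_tags, lifting) empty_iff imageE mem_Collect_eq)
  qed
  define sel where "sel l = (SOME g. g ` FB l = FA l)" for l
  have sel: "sel l ` FB l = FA l" if "l \<in> LB ` verts B" for l
    using someI_ex[OF ex[OF that]] unfolding sel_def .
  define f where "f x = sel (LB x) x" for x
  have fx: "f x \<in> verts A \<and> LA (f x) = LB x" if "x \<in> verts B" for x
  proof -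
    have "f x \<in> FA (LB x)" using sel[of "LB x"] that unfolding f_def FB_def by blast
    then show ?thesis unfolding FA_def by simp
  qed
  have s: "f ` verts B = verts A"
  proof
    show "f ` verts B \<subseteq> verts A" using fx by auto
    show "verts A \<subseteq> f ` verts B"
    proof
      fix y assume y: "y \<in> verts A"
      then have l: "LA y \<in> LB ` verts B" using im by auto
      have "y \<in> FA (LA y)" using y by (simp add: FA_def)
      then obtain x where "x \<in> FB (LA y)" "y = sel (LA y) x" using sel[OF l] by auto
      then have "x \<in> verts B" "f x = y" unfolding FB_def f_def by auto
      then show "y \<in> f ` verts B" by blast
    qed
  qed
  show ?thesis
  proof (rule strong_from_iff[OF s rA rB], intro ballI impI)
    fix x y assume xy: "x \<in> verts B" "y \<in> verts B" "f x \<noteq> f y"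
    then have ne: "x \<noteq> y" by auto
    have L: "LB x \<in> \<Lambda>" "LB y \<in> \<Lambda>" using lB xy unfolding labelling_def by auto
    have "adj A (f x) (f y) \<longleftrightarrow> RA (LA (f x)) (LA (f y))" using lA fx xy unfolding labelling_def by auto
    also have "\<dots> \<longleftrightarrow> RB (LB x) (LB y)" using fx xy RR L by auto
    also have "\<dots> \<longleftrightarrow> adj B x y" using lB xy ne unfolding labelling_def by auto
    finally show "adj A (f x) (f y) \<longleftrightarrow> adj B x y" .
  qed
qed



definition LamN :: "nat \<Rightarrow> (nat + bool \<times> nat set) set" where
  "LamN N = Inl ` {..<N} \<union> Inr ` (UNIV \<times> Pow {..<N})"

lemma finite_LamN: "finite (LamN N)" unfolding LamN_def by simp

lemma T_label:
  assumes G: "G \<in> T_class N"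
  shows "\<exists>L R. labelling (LamN N) G L R"
proof -
  have fr: "finite_refl_graph G" using G unfolding T_class_def by simp
  from G have "\<exists>Ge Gc Gf. verts G = Ge \<union> Gc \<union> Gf
        \<and> Ge \<inter> Gc = {} \<and> Ge \<inter> Gf = {} \<and> Gc \<inter> Gf = {}
        \<and> (\<forall>x\<in>Ge. \<forall>y\<in>Ge. x \<noteq> y \<longrightarrow> \<not> adj G x y)
        \<and> (\<forall>x\<in>Gc. \<forall>y\<in>Gc. x \<noteq> y \<longrightarrow> adj G x y)
        \<and> card Gf \<le> N
        \<and> (\<forall>x\<in>Ge. \<forall>y\<in>Ge. \<forall>z\<in>Gc. \<forall>t\<in>Gc. adj G x z \<longleftrightarrow> adj G y t)"
    unfolding T_class_def by simp
  then obtain Ge Gc Gf where H: "verts G = Ge \<union> Gc \<union> Gf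
        \<and> Ge \<inter> Gc = {} \<and> Ge \<inter> Gf = {} \<and> Gc \<inter> Gf = {}
        \<and> (\<forall>x\<in>Ge. \<forall>y\<in>Ge. x \<noteq> y \<longrightarrow> \<not> adj G x y)
        \<and> (\<forall>x\<in>Gc. \<forall>y\<in>Gc. x \<noteq> y \<longrightarrow> adj G x y)
        \<and> card Gf \<le> N
        \<and> (\<forall>x\<in>Ge. \<forall>y\<in>Ge. \<forall>z\<in>Gc. \<forall>t\<in>Gc. adj G x z \<longleftrightarrow> adj G y t)"
    by (elim exE)
  have V: "verts G = Ge \<union> Gc \<union> Gf" using H by (elim conjE) assumption
  have d1: "Ge \<inter> Gc = {}" using H by (elim conjE) assumption
  have d2: "Ge \<inter> Gf = {}" using H by (elim conjE) assumption
  have d3: "Gc \<inter> Gf = {}" using H by (elim conjE) assumption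
  have emp: "\<forall>x\<in>Ge. \<forall>y\<in>Ge. x \<noteq> y \<longrightarrow> \<not> adj G x y" using H by (elim conjE) assumption
  have cpl: "\<forall>x\<in>Gc. \<forall>y\<in>Gc. x \<noteq> y \<longrightarrow> adj G x y" using H by (elim conjE) assumption
  have cf: "card Gf \<le> N" using H by (elim conjE) assumption
  have uf: "\<forall>x\<in>Ge. \<forall>y\<in>Ge. \<forall>z\<in>Gc. \<forall>t\<in>Gc. adj G x z \<longleftrightarrow> adj G y t" using H by (elim conjE) assumption
  have finV: "finite (verts G)" and sym: "\<And>x y. x \<in> verts G \<Longrightarrow> y \<in> verts G \<Longrightarrow> adj G x y \<longleftrightarrow> adj G y x"
    using fr unfolding finite_refl_graph_def by blast+
  have "finite Gf" using finV V by (metis finite_Un)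
  from ex_bij_betw_finite_nat[OF this] obtain idx where bij: "bij_betw idx Gf {0..<card Gf}" by blast
  have inj: "inj_on idx Gf" using bij bij_betw_def by blast
  have idxN: "idx v < N" if "v \<in> Gf" for v proof -
    have "idx v \<in> {0..<card Gf}" using bij that unfolding bij_betw_def by blast
    then show ?thesis using cf by simp
  qed
  define u where "u = (\<exists>x\<in>Ge. \<exists>z\<in>Gc. adj G x z)"
  have uni: "adj G x z \<longleftrightarrow> u" if "x \<in> Ge" "z \<in> Gc" for x z
    using uf that unfolding u_def by blast
  define S where "S x = {a. a < N \<and> (\<exists>v\<in>Gf. idx v = a \<and> adj G x v)}" for x
  have Sf: "idx v \<in> S x \<longleftrightarrow> adj G x v" if "v \<in> Gf" for v x
    using that idxN inj unfolding S_def inj_on_def by blast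
  define L where "L x = (if x \<in> Gf then Inl (idx x) else if x \<in> Ge then Inr (False, S x) else Inr (True, S x))" for x
  define R where "R l1 l2 = (case l1 of Inl a \<Rightarrow> (case l2 of Inl b \<Rightarrow> (\<exists>v\<in>Gf. \<exists>w\<in>Gf. idx v = a \<and> idx w = b \<and> adj G v w) | Inr p \<Rightarrow> a \<in> snd p)
      | Inr p \<Rightarrow> (case l2 of Inl b \<Rightarrow> b \<in> snd p | Inr q \<Rightarrow> (if fst p = fst q then fst p else u)))" for l1 l2
  have Lf: "L x = Inl (idx x)" if "x \<in> Gf" for x using that by (simp add: L_def)
  have Le: "L x = Inr (False, S x)" if "x \<in> Ge" for x using that d2 by (auto simp: L_def)
  have Lc: "L x = Inr (True, S x)" if "x \<in> Gc" for x using that d1 d3 by (auto simp: L_def)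
  have "L ` verts G \<subseteq> LamN N"
  proof
    fix l assume "l \<in> L ` verts G"
    then obtain x where x: "x \<in> verts G" "l = L x" by blast
    have "S x \<subseteq> {..<N}" unfolding S_def by auto
    then show "l \<in> LamN N" using x idxN unfolding LamN_def L_def by auto
  qed
  moreover have "adj G x y \<longleftrightarrow> R (L x) (L y)" if xy: "x \<in> verts G" "y \<in> verts G" "x \<noteq> y" for x y
  proof -
    have syx: "adj G x y \<longleftrightarrow> adj G y x" using sym xy by blast
    have c1: ?thesis if a: "x \<in> Gf" "y \<in> Gf"
    proof -
      have "R (L x) (L y) \<longleftrightarrow> (\<exists>v\<in>Gf. \<exists>w\<in>Gf. idx v = idx x \<and> idx w = idx y \<and> adj G v w)"
        using a by (simp add: Lf R_def)
      also have "\<dots> \<longleftrightarrow> adj G x y" using a inj unfolding inj_on_def by blast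
      finally show ?thesis by simp
    qed
    have c2: ?thesis if a: "x \<in> Gf" "y \<in> Ge" using a Sf[of x y] syx by (simp add: Lf Le R_def)
    have c3: ?thesis if a: "x \<in> Gf" "y \<in> Gc" using a Sf[of x y] syx by (simp add: Lf Lc R_def)
    have c4: ?thesis if a: "x \<in> Ge" "y \<in> Gf" using a Sf[of y x] by (simp add: Lf Le R_def)
    have c5: ?thesis if a: "x \<in> Ge" "y \<in> Ge" using a emp xy by (simp add: Le R_def)
    have c6: ?thesis if a: "x \<in> Ge" "y \<in> Gc" using a uni[of x y] by (simp add: Le Lc R_def)
    have c7: ?thesis if a: "x \<in> Gc" "y \<in> Gf" using a Sf[of y x] by (simp add: Lf Lc R_def)
    have c8: ?thesis if a: "x \<in> Gc" "y \<in> Ge" using a uni[of y x] syx by (simp add: Le Lc R_def)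
    have c9: ?thesis if a: "x \<in> Gc" "y \<in> Gc" using a cpl xy by (simp add: Lc R_def)
    have "x \<in> Gf \<or> x \<in> Ge \<or> x \<in> Gc" "y \<in> Gf \<or> y \<in> Ge \<or> y \<in> Gc" using xy V by blast+
    then show ?thesis using c1 c2 c3 c4 c5 c6 c7 c8 c9 by blast
  qed
  ultimately have "labelling (LamN N) G L R" unfolding labelling_def by blast
  then show ?thesis by blast
qed

lemma T_fin: "G \<in> T_class N \<Longrightarrow> finite (verts G) \<and> (\<forall>x\<in>verts G. adj G x x)"
proof -
  assume "G \<in> T_class N"
  then have "finite_refl_graph G" by (simp add: T_class_def)
  then show ?thesis by (simp add: finite_refl_graph_def)
qed

lemma antichain_key:
  fixes g :: "nat \<Rightarrow> graph"
  assumes g: "\<forall>i. g i \<in> T_class N"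
  shows "\<exists>i j. i < j \<and> strong_hom_image_le (g i) (g j)"
proof -
  have "\<forall>i. \<exists>L R. labelling (LamN N) (g i) L R" using T_label g by blast
  then obtain LL RR where lab: "\<forall>i. labelling (LamN N) (g i) (LL i) (RR i)" by metis
  define \<Lambda> where "\<Lambda> = LamN N"
  define D where "D i = (LL i ` verts (g i), {p \<in> \<Lambda> \<times> \<Lambda>. RR i (fst p) (snd p)})" for i
  define c where "c i l = card {x\<in>verts (g i). LL i x = l}" for i l
  have fL: "finite \<Lambda>" unfolding \<Lambda>_def by (rule finite_LamN)
  have DF: "\<forall>i. D i \<in> Pow \<Lambda> \<times> Pow (\<Lambda> \<times> \<Lambda>)" using lab unfolding D_def \<Lambda>_def labelling_def by auto
  have fF: "finite (Pow \<Lambda> \<times> Pow (\<Lambda> \<times> \<Lambda>))" using fL by simp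
  have "\<exists>i j. i < j \<and> D i = D j \<and> (\<forall>l\<in>\<Lambda>. c i l \<le> c j l)"
    using dickson_pair[of \<Lambda> "Pow \<Lambda> \<times> Pow (\<Lambda> \<times> \<Lambda>)" D c] fL fF DF by blast
  then obtain i j where ij: "i < j" "D i = D j" "\<forall>l\<in>\<Lambda>. c i l \<le> c j l"
    by auto
  have im: "LL i ` verts (g i) = LL j ` verts (g j)" using ij(2) unfolding D_def by simp
  have RR: "\<forall>a\<in>\<Lambda>. \<forall>b\<in>\<Lambda>. RR i a b = RR j a b"
  proof (intro ballI)
    fix a b assume ab: "a \<in> \<Lambda>" "b \<in> \<Lambda>"
    have "{p \<in> \<Lambda> \<times> \<Lambda>. RR i (fst p) (snd p)} = {p \<in> \<Lambda> \<times> \<Lambda>. RR j (fst p) (snd p)}"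
      using ij(2) unfolding D_def by simp
    then have "(a,b) \<in> {p \<in> \<Lambda> \<times> \<Lambda>. RR i (fst p) (snd p)} \<longleftrightarrow> (a,b) \<in> {p \<in> \<Lambda> \<times> \<Lambda>. RR j (fst p) (snd p)}"
      by simp
    then show "RR i a b = RR j a b" using ab by simp
  qed
  have "strong_hom_image_le (g i) (g j)"
    apply (rule transfer[of \<Lambda> "g i" "LL i" "RR i" "g j" "LL j" "RR j"])
    using lab RR im ij(3) T_fin[of "g i" N] T_fin[of "g j" N] g unfolding \<Lambda>_def c_def by auto
  with ij show ?thesis by blast
qed

lemma nodec:
  fixes g :: "nat \<Rightarrow> graph"
  assumes g: "\<forall>i. g i \<in> T_class N"
    and st: "\<forall>i. \<exists>f. hom f (g i) (g (Suc i)) \<and> f ` verts (g i) = verts (g (Suc i))"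
    and nle: "\<forall>i. \<not> strong_hom_image_le (g i) (g (Suc i))"
  shows False
proof (rule dec_contra[of "\<lambda>i. card (verts (g i))" "\<lambda>i. card (Eset (g i))"])
  show "\<forall>i. card (verts (g (Suc i))) < card (verts (g i)) \<or>
    card (verts (g (Suc i))) = card (verts (g i)) \<and> card (Eset (g i)) < card (Eset (g (Suc i)))"
  proof
    fix i
    from st obtain f where f: "hom f (g i) (g (Suc i))" "f ` verts (g i) = verts (g (Suc i))" by blast
    have fin: "finite (verts (g i))" using T_fin[of "g i" N] g by blast
    have nl: "\<not> strong_hom_image_le (g i) (g (Suc i))" using nle by blast
    show "card (verts (g (Suc i))) < card (verts (g i)) \<or>
    card (verts (g (Suc i))) = card (verts (g i)) \<and> card (Eset (g i)) < card (Eset (g (Suc i)))"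
      by (rule step[OF f fin nl])
  qed
  show "\<forall>i. card (Eset (g i)) \<le> card (verts (g i)) * card (verts (g i))"
  proof
    fix i show "card (Eset (g i)) \<le> card (verts (g i)) * card (verts (g i))"
      using Eset_card T_fin[of "g i" N] g by blast
  qed
qed

lemma anti:
  fixes g :: "nat \<Rightarrow> graph"
  assumes "\<forall>i. g i \<in> T_class N"
  shows "\<exists>i j. i \<noteq> j \<and> strong_hom_image_le (g i) (g j)"
proof -
  from antichain_key[OF assms] obtain i j where "i < j" "strong_hom_image_le (g i) (g j)" by blast
  then show ?thesis by (intro exI[of _ i] exI[of _ j]) simp
qed

theorem theorem2p8:
  fixes N :: nat
  shows "well_quasi_ordered_on hom_image_le (T_class N) \<and> well_quasi_ordered_on strong_hom_image_le (T_class N)"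
  unfolding well_quasi_ordered_on_def
proof (intro conjI notI)
  assume "\<exists>g::nat \<Rightarrow> graph. (\<forall>i. g i \<in> T_class N) \<and> (\<forall>i. hom_image_le (g (Suc i)) (g i) \<and> \<not> hom_image_le (g i) (g (Suc i)))"
  then obtain g :: "nat \<Rightarrow> graph" where A: "\<forall>i. g i \<in> T_class N" and B: "\<forall>i. hom_image_le (g (Suc i)) (g i) \<and> \<not> hom_image_le (g i) (g (Suc i))"
    by blast
  have st: "\<forall>i. \<exists>f. hom f (g i) (g (Suc i)) \<and> f ` verts (g i) = verts (g (Suc i))"
    using B unfolding hom_image_le_def by blast
  have nl: "\<forall>i. \<not> strong_hom_image_le (g i) (g (Suc i))" using B strong_le_hom_le by blast
  show False by (rule nodec[OF A st nl])
next
  assume "\<exists>g::nat \<Rightarrow> graph. (\<forall>i. g i \<in> T_class N) \<and> (\<forall>i j. i \<noteq> j \<longrightarrow> \<not> hom_image_le (g i) (g j))"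
  then obtain g :: "nat \<Rightarrow> graph" where A: "\<forall>i. g i \<in> T_class N" and B: "\<forall>i j. i \<noteq> j \<longrightarrow> \<not> hom_image_le (g i) (g j)"
    by blast
  from anti[OF A] obtain i j where "i \<noteq> j" "strong_hom_image_le (g i) (g j)" by blast
  then show False using B strong_le_hom_le by blast
next
  assume "\<exists>g::nat \<Rightarrow> graph. (\<forall>i. g i \<in> T_class N) \<and> (\<forall>i. strong_hom_image_le (g (Suc i)) (g i) \<and> \<not> strong_hom_image_le (g i) (g (Suc i)))"
  then obtain g :: "nat \<Rightarrow> graph" where A: "\<forall>i. g i \<in> T_class N" and B: "\<forall>i. strong_hom_image_le (g (Suc i)) (g i) \<and> \<not> strong_hom_image_le (g i) (g (Suc i))"
    by blast
  have st: "\<forall>i. \<exists>f. hom f (g i) (g (Suc i)) \<and> f ` verts (g i) = verts (g (Suc i))"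
  proof
    fix i
    from B have "strong_hom_image_le (g (Suc i)) (g i)" by blast
    then obtain f where "strong_hom f (g i) (g (Suc i))" "f ` verts (g i) = verts (g (Suc i))"
      unfolding strong_hom_image_le_def by blast
    then show "\<exists>f. hom f (g i) (g (Suc i)) \<and> f ` verts (g i) = verts (g (Suc i))"
      unfolding strong_hom_def by blast
  qed
  have nl: "\<forall>i. \<not> strong_hom_image_le (g i) (g (Suc i))" using B by blast
  show False by (rule nodec[OF A st nl])
next
  assume "\<exists>g::nat \<Rightarrow> graph. (\<forall>i. g i \<in> T_class N) \<and> (\<forall>i j. i \<noteq> j \<longrightarrow> \<not> strong_hom_image_le (g i) (g j))"
  then obtain g :: "nat \<Rightarrow> graph" where A: "\<forall>i. g i \<in> T_class N" and B: "\<forall>i j. i \<noteq> j \<longrightarrow> \<not> strong_hom_image_le (g i) (g j)"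
    by blast
  from anti[OF A] obtain i j where "i \<noteq> j" "strong_hom_image_le (g i) (g j)" by blast
  then show False using B by blast
qed

end
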